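(* For each prime power $q$ there exists a $q^2$-divisible set $\mathcal{C}$ of points in a projective space over $\mathbb{F}_q$ with $|\mathcal{C}|=3q^3-q^2-q-1$ whose span has dimension $k$ satisfying $\max\{8,q+5\}\le k\le\max\{8,2q+3\}$.
   Context: Points are $1$-dimensional subspaces of $\mathbb{F}_q^v$. A set $\mathcal{C}$ of points is $\Delta$-divisible if there is an integer $u$ with $|\mathcal{C}\cap H|\equiv u\pmod{\Delta}$ for every hyperplane $H$ of $\mathbb{F}_q^v$, where $\mathcal{C}\cap H$ is the set of points of $\mathcal{C}$ contained in $H$. *)

theory Defs
  imports Complex_Main "HOL-Number_Theory.Cong" "HOL-Library.Function_Algebras"
begin

text \<open>Vectors of F^v are modelled as functions nat => F vanishing outside {0..<v};
  the field F is a finite field type, F = F_q with q = CARD(F).\<close>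

definition fscale :: "'a::field \<Rightarrow> (nat \<Rightarrow> 'a) \<Rightarrow> (nat \<Rightarrow> 'a)" where
  "fscale c x = (\<lambda>i. c * x i)"

lemma vector_space_fscale: "vector_space (fscale :: 'a::field \<Rightarrow> _)"
  by unfold_locales (simp_all add: fscale_def algebra_simps fun_eq_iff)

definition ambient :: "nat \<Rightarrow> (nat \<Rightarrow> 'a::field) set" where
  "ambient v = {x. \<forall>i\<ge>v. x i = 0}"

definition is_subspace :: "(nat \<Rightarrow> 'a::field) set \<Rightarrow> bool" where
  "is_subspace S = module.subspace (fscale :: 'a \<Rightarrow> _) S"

definition fdim :: "(nat \<Rightarrow> 'a::field) set \<Rightarrow> nat" where
  "fdim S = vector_space.dim (fscale :: 'a \<Rightarrow> _) S"

definition points :: "nat \<Rightarrow> (nat \<Rightarrow> 'a::field) set set" where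
  "points v = {P. P \<subseteq> ambient v \<and> is_subspace P \<and> fdim P = 1}"

definition hyperplanes :: "nat \<Rightarrow> (nat \<Rightarrow> 'a::field) set set" where
  "hyperplanes v = {H. H \<subseteq> ambient v \<and> is_subspace H \<and> fdim H = v - 1}"

definition divisible :: "nat \<Rightarrow> int \<Rightarrow> (nat \<Rightarrow> 'a::field) set set \<Rightarrow> bool" where
  "divisible v \<Delta> C = (\<exists>u::int. \<forall>H \<in> hyperplanes v.
      [int (card {P \<in> C. P \<subseteq> H}) = u] (mod \<Delta>))"

end

theory Submission
  imports Defs "HOL-Library.FuncSet"
begin


interpretation fs: vector_space "fscale :: 'a::field \<Rightarrow> (nat \<Rightarrow> 'a) \<Rightarrow> (nat \<Rightarrow> 'a)"
  by (rule vector_space_fscale)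

lemma fdim_fs: "fdim S = fs.dim S" by (simp add: fdim_def)
lemma is_subspace_fs: "is_subspace S = fs.subspace S" by (simp add: is_subspace_def)

lemma sum_fun_apply: "(sum f A) k = sum (\<lambda>x. f x k) A"
  by (induction A rule: infinite_finite_induct) auto

definition Sub :: "nat set \<Rightarrow> (nat \<Rightarrow> 'a::field) set" where
  "Sub I = {x. \<forall>k. k \<notin> I \<longrightarrow> x k = 0}"

definition ev :: "nat set \<Rightarrow> nat \<Rightarrow> 'a::field" where
  "ev J = (\<lambda>k. if k \<in> J then 1 else 0)"

lemma ev_in_Sub[simp]: "(ev J :: nat \<Rightarrow> 'a::field) \<in> Sub I \<longleftrightarrow> J \<subseteq> I"
  by (auto simp: ev_def Sub_def)

lemma zero_in_Sub[simp]: "0 \<in> Sub I" by (simp add: Sub_def)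

lemma Sub_scale[simp]: "(c::'a::field) \<noteq> 0 \<Longrightarrow> fscale c x \<in> Sub I \<longleftrightarrow> x \<in> Sub I"
  by (auto simp: Sub_def fscale_def)

lemma Sub_scale'[intro]: "x \<in> Sub I \<Longrightarrow> fscale c x \<in> Sub I"
  by (auto simp: Sub_def fscale_def)

lemma Sub_Int: "Sub I \<inter> Sub J = Sub (I \<inter> J)" by (auto simp: Sub_def)
lemma Sub_mono: "I \<subseteq> J \<Longrightarrow> Sub I \<subseteq> Sub J" by (auto simp: Sub_def)
lemma ambient_Sub: "ambient v = Sub {..<v}" by (auto simp: Sub_def ambient_def)

lemma Sub_subspace: "fs.subspace (Sub I)"
  unfolding fs.subspace_def by (auto simp: Sub_def fscale_def)

lemma Sub_bij: "bij_betw (\<lambda>x. restrict x I) (Sub I) (PiE I (\<lambda>_. UNIV))"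
proof (rule bij_betw_byWitness[where f'="\<lambda>f k. if k \<in> I then f k else 0"])
qed (auto simp: Sub_def fun_eq_iff restrict_def PiE_def extensional_def)

lemma card_Sub: "finite I \<Longrightarrow> card (Sub I :: (nat \<Rightarrow> 'a::{finite,field}) set) = card (UNIV :: 'a set) ^ card I"
  using bij_betw_same_card[OF Sub_bij[of I]] by (simp add: card_PiE)

lemma finite_Sub: "finite I \<Longrightarrow> finite (Sub I :: (nat \<Rightarrow> 'a::{finite,field}) set)"
  using bij_betw_finite[OF Sub_bij[of I]] by (auto intro: finite_PiE)

lemma Sub_span: "finite I \<Longrightarrow> Sub I \<subseteq> fs.span ((\<lambda>j. ev {j}) ` I :: (nat \<Rightarrow> 'a::field) set)"
proof
  fix x :: "nat \<Rightarrow> 'a" assume fi: "finite I" and x: "x \<in> Sub I"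
  have "x = (\<Sum>j\<in>I. fscale (x j) (ev {j}))"
  proof
    fix k
    show "x k = (\<Sum>j\<in>I. fscale (x j) (ev {j})) k"
      using x fi by (auto simp: sum_fun_apply fscale_def ev_def Sub_def if_distrib sum.delta cong: if_cong)
  qed
  also have "\<dots> \<in> fs.span ((\<lambda>j. ev {j}) ` I)"
    by (intro fs.span_sum fs.span_scale fs.span_base) auto
  finally show "x \<in> fs.span ((\<lambda>j. ev {j}) ` I)" .
qed

lemma ev_inj: "inj (\<lambda>j. (ev {j} :: nat \<Rightarrow> 'a::field))"
  by (auto simp: inj_def ev_def fun_eq_iff split: if_splits)

lemma indep_E: "finite I \<Longrightarrow> fs.independent ((\<lambda>j. ev {j}) ` I :: (nat \<Rightarrow> 'a::field) set)"
proof (rule fs.independent_if_scalars_zero)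
  fix f :: "(nat \<Rightarrow> 'a) \<Rightarrow> 'a" and x :: "nat \<Rightarrow> 'a"
  assume fi: "finite I" and s: "(\<Sum>x\<in>(\<lambda>j. ev {j}) ` I. fscale (f x) x) = 0" and xE: "x \<in> (\<lambda>j. ev {j}) ` I"
  then obtain j where j: "j \<in> I" "x = ev {j}" by auto
  have "0 = (\<Sum>x\<in>(\<lambda>j. ev {j}) ` I. fscale (f x) x) j" using s by simp
  also have "\<dots> = (\<Sum>i\<in>I. f (ev {i}) * ev {i} j)"
    by (simp add: sum_fun_apply fscale_def sum.reindex[OF inj_on_subset[OF ev_inj]])
  also have "\<dots> = f (ev {j})" using fi j by (simp add: ev_def if_distrib sum.delta cong: if_cong)
  finally show "f x = 0" using j by simp
qed simp


lemma E_card: "card ((\<lambda>j. ev {j}) ` I :: (nat \<Rightarrow> 'a::field) set) = card I"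
  by (rule card_image[OF inj_on_subset[OF ev_inj]]) simp

lemma hyp_max:
  assumes H: "(H :: (nat \<Rightarrow> 'a::field) set) \<in> hyperplanes v" and y: "y \<in> ambient v" "y \<notin> H"
  shows "ambient v \<subseteq> fs.span (insert y H)"
proof
  fix z :: "nat \<Rightarrow> 'a" assume z: "z \<in> ambient v"
  let ?E = "(\<lambda>j. ev {j}) ` {..<v} :: (nat \<Rightarrow> 'a) set"
  have amb: "ambient v \<subseteq> fs.span ?E" using Sub_span[of "{..<v}"] by (simp add: ambient_Sub)
  have Hs: "fs.subspace H" "H \<subseteq> ambient v" "fs.dim H = v - 1"
    using H by (auto simp: hyperplanes_def is_subspace_fs fdim_fs)
  obtain B where B: "B \<subseteq> H" "fs.independent B" "H \<subseteq> fs.span B" "card B = fs.dim H"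
    using fs.basis_exists by blast
  have finB: "finite B" using fs.independent_span_bound[of ?E B] B amb Hs by auto
  have spB: "fs.span B = H" using B Hs fs.span_subspace by blast
  have v1: "v \<ge> 1"
  proof (rule ccontr)
    assume "\<not> v \<ge> 1" then have "v = 0" by simp
    then have "y = 0" using y by (auto simp: ambient_def fun_eq_iff)
    then show False using y Hs fs.subspace_0 by blast
  qed
  have yB: "y \<notin> fs.span B" using spB y by simp
  have iyB: "fs.independent (insert y B)" using fs.independent_insertI[OF yB B(2)] .
  have cyB: "card (insert y B) = v" using yB finB B Hs v1 fs.span_base[of y B]
    by (subst card_insert_disjoint) auto
  show "z \<in> fs.span (insert y H)"
  proof (rule ccontr)
    assume zn: "z \<notin> fs.span (insert y H)"
    have zn': "z \<notin> fs.span (insert y B)" using zn fs.span_mono[of "insert y B" "insert y H"] B by blast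
    have i2: "fs.independent (insert z (insert y B))" using fs.independent_insertI[OF zn' iyB] .
    have sub: "insert z (insert y B) \<subseteq> fs.span ?E" using amb z y B Hs by blast
    have "card (insert z (insert y B)) \<le> card ?E"
      using fs.independent_span_bound[OF _ i2 sub] by simp
    moreover have "card (insert z (insert y B)) = v + 1"
      using zn' finB cyB fs.span_base[of z "insert y B"] by (subst card_insert_disjoint) auto
    ultimately show False by (simp add: E_card)
  qed
qed

lemma hyp_decomp:
  assumes H: "(H :: (nat \<Rightarrow> 'a::field) set) \<in> hyperplanes v" and y: "y \<in> ambient v" "y \<notin> H"
    and z: "z \<in> ambient v"
  shows "\<exists>k. z - fscale k y \<in> H"
proof -
  have Hs: "fs.subspace H" using H by (auto simp: hyperplanes_def is_subspace_fs)
  have "z \<in> fs.span (insert y H)" using hyp_max[OF H y] z by blast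
  moreover have "fs.span H = H" using Hs by simp
  ultimately show ?thesis unfolding fs.span_insert by auto
qed

lemma fscale_diff: "fscale a (x::nat\<Rightarrow>'a::field) - fscale b x = fscale (a - b) x"
  by (auto simp: fscale_def fun_eq_iff algebra_simps)

lemma hyp_card:
  assumes H: "(H :: (nat \<Rightarrow> 'a::{finite,field}) set) \<in> hyperplanes v"
    and W: "fs.subspace W" "W \<subseteq> ambient v" "finite W"
  shows "W \<subseteq> H \<or> card W = card (UNIV :: 'a set) * card (W \<inter> H)"
proof (cases "W \<subseteq> H")
  case False
  then obtain y where y: "y \<in> W" "y \<notin> H" by blast
  have Hs: "fs.subspace H" using H by (auto simp: hyperplanes_def is_subspace_fs)
  let ?g = "\<lambda>(h, c). h + fscale c y"
  have "bij_betw ?g ((W \<inter> H) \<times> UNIV) W"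
  proof (rule bij_betwI')
    fix p p' :: "(nat \<Rightarrow> 'a) \<times> 'a" assume p: "p \<in> (W \<inter> H) \<times> UNIV" and p': "p' \<in> (W \<inter> H) \<times> UNIV"
    obtain h c where hc: "p = (h, c)" by (cases p)
    obtain h' c' where hc': "p' = (h', c')" by (cases p')
    show "(?g p = ?g p') = (p = p')"
    proof
      assume eq: "?g p = ?g p'"
      then have e1: "h + fscale c y = h' + fscale c' y" using hc hc' by simp
      have e2: "fscale (c - c') y = h' - h" using e1
        by (auto simp: fscale_def fun_eq_iff algebra_simps)
      have hh: "h' - h \<in> H" using p p' hc hc' Hs fs.subspace_diff by auto
      have "c = c'"
      proof (rule ccontr)
        assume "c \<noteq> c'"
        then have "y = fscale (inverse (c - c')) (fscale (c - c') y)"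
          by (simp add: fscale_def fun_eq_iff)
        also have "\<dots> \<in> H" using e2 hh Hs fs.subspace_scale by auto
        finally show False using y by simp
      qed
      then show "p = p'" using e1 hc hc' by simp
    qed simp
  next
    fix p :: "(nat \<Rightarrow> 'a) \<times> 'a" assume "p \<in> (W \<inter> H) \<times> UNIV"
    then show "?g p \<in> W" using W(1) y(1) fs.subspace_add[OF W(1)] fs.subspace_scale[OF W(1)] by auto
  next
    fix w assume w: "w \<in> W"
    obtain k where k: "w - fscale k y \<in> H" using hyp_decomp[OF H _ y(2)] w y W by blast
    have "w - fscale k y \<in> W" using w y W fs.subspace_diff fs.subspace_scale by blast
    then show "\<exists>p \<in> (W \<inter> H) \<times> UNIV. w = ?g p"
      using k by (intro bexI[of _ "(w - fscale k y, k)"]) auto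
  qed
  then have "card W = card ((W \<inter> H) \<times> (UNIV :: 'a set))" by (simp add: bij_betw_same_card)
  then show ?thesis by (simp add: card_cartesian_product)
qed simp


definition line :: "(nat \<Rightarrow> 'a::field) \<Rightarrow> (nat \<Rightarrow> 'a) set" where
  "line x = range (\<lambda>c. fscale c x)"

lemma in_line: "x \<in> line x"
  unfolding line_def by (rule range_eqI[of _ _ 1]) (simp add: fscale_def)

lemma line_subspace: "fs.subspace (line x)"
  unfolding fs.subspace_def line_def
proof (intro conjI ballI allI)
  show "0 \<in> range (\<lambda>c. fscale c x)" by (rule range_eqI[of _ _ 0]) (simp add: fscale_def fun_eq_iff)
next
  fix a b assume "a \<in> range (\<lambda>c. fscale c x)" "b \<in> range (\<lambda>c. fscale c x)"
  then obtain c d where "a = fscale c x" "b = fscale d x" by auto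
  then show "a + b \<in> range (\<lambda>c. fscale c x)"
    by (intro range_eqI[of _ _ "c + d"]) (simp add: fscale_def fun_eq_iff algebra_simps)
next
  fix e a assume "a \<in> range (\<lambda>c. fscale c x)"
  then obtain c where "a = fscale c x" by auto
  then show "fscale e a \<in> range (\<lambda>c. fscale c x)"
    by (intro range_eqI[of _ _ "e * c"]) (simp add: fscale_def fun_eq_iff algebra_simps)
qed

lemma line_span: "line x = fs.span {x}"
proof
  show "line x \<subseteq> fs.span {x}" unfolding line_def using fs.span_base fs.span_scale by blast
  show "fs.span {x} \<subseteq> line x" by (rule fs.span_minimal) (auto simp: in_line line_subspace)
qed

lemma line_dim: "x \<noteq> 0 \<Longrightarrow> fs.dim (line x) = 1"
  unfolding line_span by (subst fs.dim_span_eq_card_independent) auto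

lemma line_Sub: "x \<in> Sub I \<Longrightarrow> line x \<subseteq> Sub I"
  unfolding line_def by auto

lemma line_same:
  assumes "y \<in> line x" "y \<noteq> 0" shows "line y = line x"
proof -
  obtain c where c: "y = fscale c x" using assms(1) by (auto simp: line_def)
  have c0: "c \<noteq> 0" using c assms(2) by (auto simp: fscale_def fun_eq_iff)
  show ?thesis
  proof
    show "line y \<subseteq> line x"
    proof
      fix z assume "z \<in> line y"
      then obtain d where "z = fscale d y" by (auto simp: line_def)
      then show "z \<in> line x" unfolding line_def c
        by (intro range_eqI[of _ _ "d * c"]) (simp add: fscale_def fun_eq_iff)
    qed
    show "line x \<subseteq> line y"
    proof
      fix z assume "z \<in> line x"
      then obtain d where "z = fscale d x" by (auto simp: line_def)
      then show "z \<in> line y" unfolding line_def c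
        using c0 by (intro range_eqI[of _ _ "d * inverse c"]) (simp add: fscale_def fun_eq_iff)
    qed
  qed
qed

lemma line_card:
  assumes "(x :: nat \<Rightarrow> 'a::{finite,field}) \<noteq> 0"
  shows "card (line x - {0}) = card (UNIV :: 'a set) - 1"
proof -
  have "line x - {0} = (\<lambda>c. fscale c x) ` (UNIV - {0})"
    using assms by (auto simp: line_def fscale_def fun_eq_iff)
  moreover have "inj (\<lambda>c. fscale c x)"
  proof
    fix a b assume "fscale a x = fscale b x"
    then have "fscale (a - b) x = 0" using fscale_diff[of a x b] by simp
    then show "a = b" using assms by simp
  qed
  ultimately show ?thesis by (simp add: card_image inj_on_subset card_Diff_singleton)
qed

lemma count_lines:
  fixes W :: "(nat \<Rightarrow> 'a::{finite,field}) set"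
  assumes fin: "finite W" and nz: "0 \<notin> W" and cl: "\<And>x c. x \<in> W \<Longrightarrow> c \<noteq> 0 \<Longrightarrow> fscale c x \<in> W"
  shows "card W = (card (UNIV :: 'a set) - 1) * card (line ` W)"
proof -
  have eq: "W = (\<Union>P\<in>line ` W. P - {0})"
  proof
    show "W \<subseteq> (\<Union>P\<in>line ` W. P - {0})" using nz in_line by blast
    show "(\<Union>P\<in>line ` W. P - {0}) \<subseteq> W"
    proof
      fix y assume "y \<in> (\<Union>P\<in>line ` W. P - {0})"
      then obtain x c where x: "x \<in> W" "y = fscale c x" "y \<noteq> 0" by (auto simp: line_def)
      then have "c \<noteq> 0" by (auto simp: fscale_def fun_eq_iff)
      then show "y \<in> W" using cl x by simp
    qed
  qed
  have "card (\<Union>P\<in>line ` W. P - {0}) = (\<Sum>P\<in>line ` W. card (P - {0}))"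
  proof (rule card_UN_disjoint)
    show "finite (line ` W)" using fin by simp
    show "\<forall>P\<in>line ` W. finite (P - {0})" by (simp add: line_def)
    show "\<forall>P\<in>line ` W. \<forall>Q\<in>line ` W. P \<noteq> Q \<longrightarrow> (P - {0}) \<inter> (Q - {0}) = {}"
      using line_same by blast
  qed
  also have "\<dots> = (\<Sum>P\<in>line ` W. card (UNIV :: 'a set) - 1)"
  proof (rule sum.cong[OF refl])
    fix P assume "P \<in> line ` W"
    then obtain x where x: "x \<in> W" "P = line x" by auto
    then have "x \<noteq> 0" using nz by auto
    then show "card (P - {0}) = card (UNIV :: 'a set) - 1" using x line_card[of x] by simp
  qed
  finally show ?thesis using eq by simp
qed

lemma count_lines_H:
  fixes V :: "(nat \<Rightarrow> 'a::{finite,field}) set"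
  assumes fin: "finite V" and nz: "0 \<notin> V" and cl: "\<And>x c. x \<in> V \<Longrightarrow> c \<noteq> 0 \<Longrightarrow> fscale c x \<in> V"
    and H: "fs.subspace H"
  shows "card (V \<inter> H) = (card (UNIV :: 'a set) - 1) * card {P \<in> line ` V. P \<subseteq> H}"
proof -
  have "{P \<in> line ` V. P \<subseteq> H} = line ` (V \<inter> H)"
  proof
    show "{P \<in> line ` V. P \<subseteq> H} \<subseteq> line ` (V \<inter> H)" using in_line by blast
    show "line ` (V \<inter> H) \<subseteq> {P \<in> line ` V. P \<subseteq> H}"
      using fs.span_minimal[of "{_}" H] H line_span by auto
  qed
  moreover have "card (V \<inter> H) = (card (UNIV :: 'a set) - 1) * card (line ` (V \<inter> H))"
    using fin nz cl fs.subspace_scale[OF H] by (intro count_lines) auto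
  ultimately show ?thesis by simp
qed


lemma card_diff1:
  assumes "finite A" "B \<subseteq> A"
  shows "int (card ((A - B) \<inter> H)) = int (card (A \<inter> H)) - int (card (B \<inter> H))"
proof -
  have "(A - B) \<inter> H = (A \<inter> H) - (B \<inter> H)" by auto
  moreover have "card ((A \<inter> H) - (B \<inter> H)) = card (A \<inter> H) - card (B \<inter> H)"
    using assms by (intro card_Diff_subset) (auto intro: finite_subset)
  moreover have "card (B \<inter> H) \<le> card (A \<inter> H)" using assms by (intro card_mono) auto
  ultimately show ?thesis by simp
qed

lemma card_diff2:
  assumes "finite A" "B \<subseteq> A" "B' \<subseteq> A"
  shows "int (card ((A - (B \<union> B')) \<inter> H)) = int (card (A \<inter> H)) - int (card (B \<inter> H))
     - int (card (B' \<inter> H)) + int (card ((B \<inter> B') \<inter> H))"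
proof -
  have "int (card ((A - (B \<union> B')) \<inter> H)) = int (card (A \<inter> H)) - int (card ((B \<union> B') \<inter> H))"
    using assms by (intro card_diff1) auto
  moreover have "card ((B \<union> B') \<inter> H) + card ((B \<inter> B') \<inter> H) = card (B \<inter> H) + card (B' \<inter> H)"
  proof -
    have "(B \<union> B') \<inter> H = (B \<inter> H) \<union> (B' \<inter> H)" "(B \<inter> B') \<inter> H = (B \<inter> H) \<inter> (B' \<inter> H)" by auto
    moreover have "finite (B \<inter> H)" "finite (B' \<inter> H)" using assms by (auto intro: finite_subset)
    ultimately show ?thesis using card_Un_Int by metis
  qed
  ultimately show ?thesis by linarith
qed

definition V1 :: "nat \<Rightarrow> (nat \<Rightarrow> 'a::field) set" where
  "V1 n = (\<Union>i\<in>{1..<n}. Sub {i, n, n+1} - Sub {n, n+1})"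
definition V2 :: "nat \<Rightarrow> (nat \<Rightarrow> 'a::field) set" where
  "V2 n = Sub {n, n+1, n+2, n+3} - (Sub {n+1, n+2, n+3} \<union> Sub {n, n+1})"
definition V3 :: "nat \<Rightarrow> (nat \<Rightarrow> 'a::field) set" where
  "V3 n = Sub {n+1, n+4, n+5, n+6} - (Sub {n+4, n+5, n+6} \<union> Sub {n+1})"
definition VV :: "nat \<Rightarrow> (nat \<Rightarrow> 'a::field) set" where
  "VV n = V1 n \<union> V2 n \<union> V3 n"

abbreviation cnt :: "(nat \<Rightarrow> 'a::field) set \<Rightarrow> nat set \<Rightarrow> int" where
  "cnt H I \<equiv> int (card (Sub I \<inter> H))"

lemma VV_formula:
  fixes H :: "(nat \<Rightarrow> 'a::{finite,field}) set"
  shows "int (card (VV n \<inter> H)) =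
    (\<Sum>i\<in>{1..<n}. cnt H {i, n, n+1} - cnt H {n, n+1})
    + (cnt H {n, n+1, n+2, n+3} - cnt H {n+1, n+2, n+3} - cnt H {n, n+1} + cnt H {n+1})
    + (cnt H {n+1, n+4, n+5, n+6} - cnt H {n+4, n+5, n+6} - cnt H {n+1} + cnt H {})"
proof -
  have fin: "\<And>I. finite I \<Longrightarrow> finite (Sub I :: (nat \<Rightarrow> 'a) set)" by (rule finite_Sub)
  have d12: "V1 n \<inter> V2 n = ({} :: (nat \<Rightarrow> 'a) set)"
    by (auto simp: V1_def V2_def Sub_def)
  have d13: "V1 n \<inter> V3 n = ({} :: (nat \<Rightarrow> 'a) set)"
    by (auto simp: V1_def V3_def Sub_def)
  have d23: "V2 n \<inter> V3 n = ({} :: (nat \<Rightarrow> 'a) set)"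
    by (auto simp: V2_def V3_def Sub_def)
  have fV1: "finite (V1 n :: (nat \<Rightarrow> 'a) set)" by (auto simp: V1_def intro!: finite_Diff fin)
  have fV2: "finite (V2 n :: (nat \<Rightarrow> 'a) set)" by (auto simp: V2_def intro!: finite_Diff fin)
  have fV3: "finite (V3 n :: (nat \<Rightarrow> 'a) set)" by (auto simp: V3_def intro!: finite_Diff fin)
  have "card (VV n \<inter> H) = card (V1 n \<inter> H) + card (V2 n \<inter> H) + card (V3 n \<inter> H)"
  proof -
    have "VV n \<inter> H = ((V1 n \<inter> H) \<union> (V2 n \<inter> H)) \<union> (V3 n \<inter> H)" by (auto simp: VV_def)
    moreover have "card (((V1 n \<inter> H) \<union> (V2 n \<inter> H)) \<union> (V3 n \<inter> H)) = card ((V1 n \<inter> H) \<union> (V2 n \<inter> H)) + card (V3 n \<inter> H)"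
      by (rule card_Un_disjoint) (use fV1 fV2 fV3 d13 d23 in auto)
    moreover have "card ((V1 n \<inter> H) \<union> (V2 n \<inter> H)) = card (V1 n \<inter> H) + card (V2 n \<inter> H)"
      by (rule card_Un_disjoint) (use fV1 fV2 d12 in auto)
    ultimately show ?thesis by simp
  qed
  moreover have "int (card (V1 n \<inter> H)) = (\<Sum>i\<in>{1..<n}. cnt H {i, n, n+1} - cnt H {n, n+1})"
  proof -
    have "V1 n \<inter> H = (\<Union>i\<in>{1..<n}. (Sub {i, n, n+1} - Sub {n, n+1}) \<inter> H)" by (auto simp: V1_def)
    moreover have "card (\<Union>i\<in>{1..<n}. ((Sub {i, n, n+1} - Sub {n, n+1}) \<inter> H :: (nat \<Rightarrow> 'a) set))
        = (\<Sum>i\<in>{1..<n}. card ((Sub {i, n, n+1} - Sub {n, n+1}) \<inter> H))"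
      apply (rule card_UN_disjoint)
      apply simp
      apply (auto intro!: finite_Int finite_Diff fin)[1]
      apply (auto simp: Sub_def)
      done
    moreover have "\<And>i. int (card ((Sub {i, n, n+1} - Sub {n, n+1}) \<inter> H)) = cnt H {i, n, n+1} - cnt H {n, n+1}"
      by (rule card_diff1) (auto simp: fin Sub_mono)
    ultimately show ?thesis by simp
  qed
  moreover have "int (card (V2 n \<inter> H)) = cnt H {n, n+1, n+2, n+3} - cnt H {n+1, n+2, n+3} - cnt H {n, n+1} + cnt H {n+1}"
  proof -
    have "Sub {n+1, n+2, n+3} \<inter> Sub {n, n+1} = (Sub {n+1} :: (nat \<Rightarrow> 'a) set)" by (auto simp: Sub_def)
    then show ?thesis unfolding V2_def by (subst card_diff2) (auto simp: fin Sub_mono)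
  qed
  moreover have "int (card (V3 n \<inter> H)) = cnt H {n+1, n+4, n+5, n+6} - cnt H {n+4, n+5, n+6} - cnt H {n+1} + cnt H {}"
  proof -
    have "Sub {n+4, n+5, n+6} \<inter> Sub {n+1} = (Sub {} :: (nat \<Rightarrow> 'a) set)" by (simp add: Sub_Int)
    then show ?thesis unfolding V3_def by (subst card_diff2) (auto simp: fin Sub_mono)
  qed
  ultimately show ?thesis by simp
qed


lemma card_field_ge2: "card (UNIV :: 'a::{finite,field} set) \<ge> 2"
proof -
  have "card {0, 1 :: 'a} \<le> card (UNIV :: 'a set)" by (rule card_mono) auto
  then show ?thesis by simp
qed

lemma card_field_pos[simp]: "card (UNIV :: 'a::{finite,field} set) > 0"
  using card_field_ge2[where 'a='a] by linarith

lemma sub_hyp: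
  assumes H: "(H :: (nat \<Rightarrow> 'a::{finite,field}) set) \<in> hyperplanes v" and I: "finite I" "I \<subseteq> {..<v}"
  shows "card (Sub I \<inter> H) = card (UNIV :: 'a set) ^ card I \<or>
         card (UNIV :: 'a set) ^ card I = card (UNIV :: 'a set) * card (Sub I \<inter> H)"
proof -
  have "Sub I \<subseteq> ambient v" using Sub_mono[OF I(2)] by (simp add: ambient_Sub)
  then have "Sub I \<subseteq> H \<or> card (Sub I :: (nat \<Rightarrow> 'a) set) = card (UNIV :: 'a set) * card (Sub I \<inter> H)"
    using hyp_card[OF H Sub_subspace] finite_Sub[OF I(1)] by blast
  moreover have "Sub I \<subseteq> H \<Longrightarrow> Sub I \<inter> H = Sub I" by blast
  ultimately show ?thesis using card_Sub[OF I(1)] by (metis)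
qed

lemma sub_hyp3:
  assumes H: "(H :: (nat \<Rightarrow> 'a::{finite,field}) set) \<in> hyperplanes v" and I: "finite I" "I \<subseteq> {..<v}"
    and c: "card I \<ge> 3"
  shows "int (card (UNIV :: 'a set)) ^ 2 dvd cnt H I"
proof -
  let ?q = "card (UNIV :: 'a set)"
  have q0: "?q > 0" by simp
  obtain k where k: "card I = k + 3" using c by (metis add.commute le_Suc_ex)
  have "?q ^ card I = ?q^2 * ?q^(k+1)" unfolding k by (simp add: power_add eval_nat_numeral algebra_simps)
  moreover have "?q ^ card I = ?q * (?q^2 * ?q^k)" unfolding k by (simp add: power_add eval_nat_numeral algebra_simps)
  ultimately have "card (Sub I \<inter> H) = ?q^2 * ?q^(k+1) \<or> card (Sub I \<inter> H) = ?q^2 * ?q^k"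
    using sub_hyp[OF H I] q0 by (metis mult_left_cancel not_gr0)
  then have "?q^2 dvd card (Sub I \<inter> H)" by auto
  then show ?thesis by (metis of_nat_dvd_iff of_nat_power)
qed

lemma sub_hyp2:
  assumes H: "(H :: (nat \<Rightarrow> 'a::{finite,field}) set) \<in> hyperplanes v" and I: "finite I" "I \<subseteq> {..<v}"
    and c: "card I = 2"
  shows "int (card (UNIV :: 'a set)) dvd cnt H I"
proof -
  let ?q = "card (UNIV :: 'a set)"
  have q0: "?q > 0" by simp
  have "card (Sub I \<inter> H) = ?q * ?q \<or> ?q * ?q = ?q * card (Sub I \<inter> H)"
    using sub_hyp[OF H I] c by (simp add: power2_eq_square)
  then have "card (Sub I \<inter> H) = ?q * ?q \<or> card (Sub I \<inter> H) = ?q" using q0 by auto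
  then have "?q dvd card (Sub I \<inter> H)" by auto
  then show ?thesis by (metis of_nat_dvd_iff)
qed

lemma VV_mod:
  fixes H :: "(nat \<Rightarrow> 'a::{finite,field}) set"
  assumes H: "H \<in> hyperplanes v" and n: "n = card (UNIV :: 'a set)" and v: "n + 7 \<le> v"
  shows "int n ^ 2 dvd int (card (VV n \<inter> H)) - 1"
proof -
  have n1: "n \<ge> 1" using n card_field_pos[where 'a='a] by linarith
  have Hs: "fs.subspace H" using H by (auto simp: hyperplanes_def is_subspace_fs)
  have c0: "cnt H {} = 1"
  proof -
    have "Sub {} \<inter> H = {0}" using fs.subspace_0[OF Hs] by (auto simp: Sub_def fun_eq_iff)
    then show ?thesis by simp
  qed
  have D3: "\<And>I. finite I \<Longrightarrow> I \<subseteq> {..<v} \<Longrightarrow> card I \<ge> 3 \<Longrightarrow> int n ^ 2 dvd cnt H I"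
    using sub_hyp3[OF H] n by blast
  obtain t where t: "cnt H {n, n+1} = int n * t"
    using sub_hyp2[OF H, of "{n, n+1}"] v n by (auto elim!: dvdE)
  have a: "int n ^ 2 dvd (\<Sum>i\<in>{1..<n}. cnt H {i, n, n+1})"
    by (rule dvd_sum, rule D3) (use v in auto)
  have b: "int n ^ 2 dvd cnt H {n, n+1, n+2, n+3}" by (rule D3) (use v in auto)
  have c: "int n ^ 2 dvd cnt H {n+1, n+2, n+3}" by (rule D3) (use v in auto)
  have d: "int n ^ 2 dvd cnt H {n+1, n+4, n+5, n+6}" by (rule D3) (use v in auto)
  have e: "int n ^ 2 dvd cnt H {n+4, n+5, n+6}" by (rule D3) (use v in auto)
  have s0: "(\<Sum>i\<in>{1..<n}. cnt H {n, n+1}) = (int n - 1) * (int n * t)"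
    using n1 t by (simp add: of_nat_diff)
  have s: "(\<Sum>i\<in>{1..<n}. cnt H {i, n, n+1} - cnt H {n, n+1})
      = (\<Sum>i\<in>{1..<n}. cnt H {i, n, n+1}) - (int n - 1) * (int n * t)"
    unfolding sum_subtractf s0 ..
  have "int (card (VV n \<inter> H)) - 1 = (\<Sum>i\<in>{1..<n}. cnt H {i, n, n+1}) + cnt H {n, n+1, n+2, n+3}
     - cnt H {n+1, n+2, n+3} + cnt H {n+1, n+4, n+5, n+6} - cnt H {n+4, n+5, n+6} - int n ^ 2 * t"
    unfolding VV_formula unfolding s unfolding c0 t by (simp add: algebra_simps power2_eq_square)
  also have "int n ^ 2 dvd \<dots>" using a b c d e by (intro dvd_diff dvd_add) auto
  finally show ?thesis .
qed

lemma VV_card: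
  fixes n :: nat
  assumes n: "n = card (UNIV :: 'a::{finite,field} set)"
  shows "int (card (VV n :: (nat \<Rightarrow> 'a) set)) = 3 * int n ^ 4 - 4 * int n ^ 3 + 1"
proof -
  have n1: "n \<ge> 1" using n card_field_pos[where 'a='a] by linarith
  have C: "\<And>I. finite I \<Longrightarrow> cnt (UNIV :: (nat \<Rightarrow> 'a) set) I = int n ^ card I"
    using card_Sub n by simp
  have s: "(\<Sum>i\<in>{1..<n}. cnt (UNIV :: (nat \<Rightarrow> 'a) set) {i, n, n+1} - cnt (UNIV :: (nat \<Rightarrow> 'a) set) {n, n+1})
      = (\<Sum>i\<in>{1..<n}. int n ^ 3 - int n ^ 2)"
    by (rule sum.cong[OF refl]) (auto simp: card_Sub n[symmetric] power2_eq_square power3_eq_cube)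
  have "int (card (VV n :: (nat \<Rightarrow> 'a) set)) = int (card (VV n \<inter> (UNIV :: (nat \<Rightarrow> 'a) set)))" by simp
  also have "\<dots> = (int n - 1) * (int n ^ 3 - int n ^ 2) + (int n ^ 4 - int n ^ 3 - int n ^ 2 + int n)
     + (int n ^ 4 - int n ^ 3 - int n + 1)"
    unfolding VV_formula unfolding s using n1
    by (simp add: card_Sub n[symmetric] of_nat_diff eval_nat_numeral algebra_simps)
  also have "\<dots> = 3 * int n ^ 4 - 4 * int n ^ 3 + 1" by (simp add: algebra_simps power_def eval_nat_numeral)
  finally show ?thesis .
qed


lemma VV_finite: "finite (VV n :: (nat \<Rightarrow> 'a::{finite,field}) set)"
  by (auto simp: VV_def V1_def V2_def V3_def intro!: finite_Diff finite_Sub)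

lemma VV_nz: "0 \<notin> VV n"
  by (simp add: VV_def V1_def V2_def V3_def)

lemma VV_cl: "x \<in> VV n \<Longrightarrow> c \<noteq> 0 \<Longrightarrow> fscale c x \<in> VV n"
  by (simp add: VV_def V1_def V2_def V3_def)



lemma VV_Sub: "n \<ge> 1 \<Longrightarrow> (VV n :: (nat \<Rightarrow> 'a::field) set) \<subseteq> Sub {1..<n+7}"
  unfolding VV_def V1_def V2_def V3_def
  by (intro Un_least UN_least order_trans[OF Diff_subset] Sub_mono) auto

lemma VV_span:
  assumes j: "j \<in> {1..<n+7}"
  shows "(ev {j} :: nat \<Rightarrow> 'a::field) \<in> fs.span (VV n)"
proof -
  let ?S = "fs.span (VV n :: (nat \<Rightarrow> 'a) set)"
  have in2: "\<And>J. J \<subseteq> {n, n+1, n+2, n+3} \<Longrightarrow> n \<in> J \<Longrightarrow> (n+2 \<in> J \<or> n+3 \<in> J) \<Longrightarrow> (ev J :: nat \<Rightarrow> 'a) \<in> ?S"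
    by (rule fs.span_base) (auto simp: VV_def V2_def)
  have in3: "\<And>J. J \<subseteq> {n+1, n+4, n+5, n+6} \<Longrightarrow> n+1 \<in> J \<Longrightarrow> (n+4 \<in> J \<or> n+5 \<in> J \<or> n+6 \<in> J) \<Longrightarrow> (ev J :: nat \<Rightarrow> 'a) \<in> ?S"
    by (rule fs.span_base) (auto simp: VV_def V3_def)
  have e2: "(ev {n+2} :: nat \<Rightarrow> 'a) \<in> ?S"
  proof -
    have "(ev {n+2} :: nat \<Rightarrow> 'a) = ev {n, n+2, n+3} - ev {n, n+3}" by (auto simp: ev_def fun_eq_iff)
    then show ?thesis by (simp add: fs.span_diff in2)
  qed
  have e3: "(ev {n+3} :: nat \<Rightarrow> 'a) \<in> ?S"
  proof -
    have "(ev {n+3} :: nat \<Rightarrow> 'a) = ev {n, n+2, n+3} - ev {n, n+2}" by (auto simp: ev_def fun_eq_iff)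
    then show ?thesis by (simp add: fs.span_diff in2)
  qed
  have e0: "(ev {n} :: nat \<Rightarrow> 'a) \<in> ?S"
  proof -
    have "(ev {n} :: nat \<Rightarrow> 'a) = ev {n, n+2} - ev {n+2}" by (auto simp: ev_def fun_eq_iff)
    then show ?thesis using e2 by (simp add: fs.span_diff in2)
  qed
  have e4: "(ev {n+4} :: nat \<Rightarrow> 'a) \<in> ?S"
  proof -
    have "(ev {n+4} :: nat \<Rightarrow> 'a) = ev {n+1, n+4, n+5} - ev {n+1, n+5}" by (auto simp: ev_def fun_eq_iff)
    then show ?thesis by (simp add: fs.span_diff in3)
  qed
  have e5: "(ev {n+5} :: nat \<Rightarrow> 'a) \<in> ?S"
  proof -
    have "(ev {n+5} :: nat \<Rightarrow> 'a) = ev {n+1, n+4, n+5} - ev {n+1, n+4}" by (auto simp: ev_def fun_eq_iff)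
    then show ?thesis by (simp add: fs.span_diff in3)
  qed
  have e6: "(ev {n+6} :: nat \<Rightarrow> 'a) \<in> ?S"
  proof -
    have "(ev {n+6} :: nat \<Rightarrow> 'a) = ev {n+1, n+4, n+6} - ev {n+1, n+4}" by (auto simp: ev_def fun_eq_iff)
    then show ?thesis by (simp add: fs.span_diff in3)
  qed
  have e1: "(ev {n+1} :: nat \<Rightarrow> 'a) \<in> ?S"
  proof -
    have "(ev {n+1} :: nat \<Rightarrow> 'a) = ev {n+1, n+4} - ev {n+4}" by (auto simp: ev_def fun_eq_iff)
    then show ?thesis using e4 by (simp add: fs.span_diff in3)
  qed
  show ?thesis
  proof (cases "j < n")
    case True
    then have "(ev {j} :: nat \<Rightarrow> 'a) \<in> VV n" using j by (auto simp: VV_def V1_def)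
    then show ?thesis by (rule fs.span_base)
  next
    case False
    then have "j = n \<or> j = n+1 \<or> j = n+2 \<or> j = n+3 \<or> j = n+4 \<or> j = n+5 \<or> j = n+6" using j by auto
    then show ?thesis using e0 e1 e2 e3 e4 e5 e6 by auto
  qed
qed


theorem corollary4p14:
  fixes q :: nat
  assumes "card (UNIV :: 'a::{finite,field} set) = q"
  shows "\<exists>(v::nat) (C :: (nat \<Rightarrow> 'a) set set).
           C \<subseteq> points v \<and> divisible v (int q ^ 2) C \<and>
           int (card C) = 3 * int q ^ 3 - int q ^ 2 - int q - 1 \<and>
           max 8 (q + 5) \<le> fdim (\<Union>C) \<and> fdim (\<Union>C) \<le> max 8 (2 * q + 3)"
proof -
  have q: "q = card (UNIV :: 'a set)" using assms by simp
  have q2: "q \<ge> 2" using card_field_ge2[where 'a='a] q by simp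
  define V where "V = (VV q :: (nat \<Rightarrow> 'a) set)"
  define C where "C = line ` V"
  define v where "v = q + 7"
  have finV: "finite V" unfolding V_def by (rule VV_finite)
  have nzV: "0 \<notin> V" unfolding V_def by (rule VV_nz)
  have clV: "\<And>x c. x \<in> V \<Longrightarrow> c \<noteq> 0 \<Longrightarrow> fscale c x \<in> V" unfolding V_def by (rule VV_cl)
  have VS: "V \<subseteq> Sub {1..<q+7}" unfolding V_def by (rule VV_Sub) (use q2 in simp)
  have pts: "C \<subseteq> points v"
  proof
    fix P assume "P \<in> C"
    then obtain x where x: "x \<in> V" "P = line x" by (auto simp: C_def)
    have "Sub {1..<q+7} \<subseteq> (Sub {..<v} :: (nat \<Rightarrow> 'a) set)" by (rule Sub_mono) (auto simp: v_def)
    then have "x \<in> ambient v" using x VS by (auto simp: ambient_Sub)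
    then have "line x \<subseteq> ambient v" using line_Sub[of x "{..<v}"] by (simp add: ambient_Sub)
    moreover have "x \<noteq> 0" using x nzV by auto
    ultimately show "P \<in> points v"
      using x line_subspace[of x] line_dim[of x] by (simp add: points_def is_subspace_fs fdim_fs)
  qed
  have div: "divisible v (int q ^ 2) C"
    unfolding divisible_def
  proof (intro exI[of _ "- (int q + 1)"] ballI)
    fix H :: "(nat \<Rightarrow> 'a) set" assume H: "H \<in> hyperplanes v"
    have Hs: "fs.subspace H" using H by (auto simp: hyperplanes_def is_subspace_fs)
    define N where "N = card {P \<in> C. P \<subseteq> H}"
    have "card (V \<inter> H) = (q - 1) * N"
      unfolding N_def C_def q using count_lines_H[OF finV nzV clV Hs] .
    then have e: "int (card (V \<inter> H)) = (int q - 1) * int N" using q2 by (simp add: of_nat_diff)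
    have "int q ^ 2 dvd int (card (V \<inter> H)) - 1" unfolding V_def by (rule VV_mod[OF H q]) (simp add: v_def)
    then have d: "int q ^ 2 dvd (int q - 1) * int N - 1" using e by simp
    have "int N - (- (int q + 1)) = - (int q + 1) * ((int q - 1) * int N - 1) + int q ^ 2 * int N"
      by (simp add: algebra_simps power2_eq_square)
    also have "int q ^ 2 dvd \<dots>" using d by (intro dvd_add dvd_mult2 dvd_mult) auto
    finally show "[int (card {P \<in> C. P \<subseteq> H}) = - (int q + 1)] (mod int q ^ 2)"
      unfolding N_def[symmetric] by (simp add: cong_iff_dvd_diff)
  qed
  have crd: "int (card C) = 3 * int q ^ 3 - int q ^ 2 - int q - 1"
  proof -
    have "card V = (q - 1) * card C" unfolding C_def q using count_lines[OF finV nzV clV] .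
    then have "(int q - 1) * int (card C) = 3 * int q ^ 4 - 4 * int q ^ 3 + 1"
      using VV_card[OF q] q2 by (simp add: V_def of_nat_diff)
    also have "\<dots> = (int q - 1) * (3 * int q ^ 3 - int q ^ 2 - int q - 1)"
      by (simp add: algebra_simps eval_nat_numeral)
    finally show ?thesis using q2 by simp
  qed
  let ?E = "(\<lambda>j. ev {j}) ` {1..<q+7} :: (nat \<Rightarrow> 'a) set"
  have UC: "\<Union>C \<subseteq> Sub {1..<q+7}" using VS line_Sub by (auto simp: C_def)
  have VC: "V \<subseteq> \<Union>C" using in_line by (auto simp: C_def)
  have sp: "fs.span ?E = fs.span (\<Union>C)"
  proof
    show "fs.span ?E \<subseteq> fs.span (\<Union>C)"
    proof (rule fs.span_minimal[OF _ fs.subspace_span])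
      show "?E \<subseteq> fs.span (\<Union>C)"
        using VV_span[of _ q] fs.span_mono[OF VC] unfolding V_def by blast
    qed
    show "fs.span (\<Union>C) \<subseteq> fs.span ?E"
      by (rule fs.span_minimal[OF _ fs.subspace_span]) (use UC Sub_span[of "{1..<q+7}"] in auto)
  qed
  have dim: "fdim (\<Union>C) = q + 6"
    unfolding fdim_fs using fs.dim_eq_card[OF sp indep_E] E_card[where 'a='a] by simp
  show ?thesis
    using pts div crd dim q2 by (intro exI[of _ v] exI[of _ C]) auto
qed

end
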